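(* Let $n_x, d \in \mathbb{Z}^+$, let $\kappa_{\max} > 1$, let $\mathsf{X} \in \mathbb{R}^{n_x \times d}$ be arbitrary, and let $\tilde{\mathsf{K}}_\nabla(\boldsymbol{\gamma})$ be the modified gradient-enhanced Gaussian kernel matrix defined in the context. Set $$\eta_{\tilde{\mathsf{K}}_\nabla}(n_x, d) = \frac{1 + (n_x-1) \frac{1 + \sqrt{1 + 4d}}{2} e^{-\frac{1 + 2d - \sqrt{1 + 4d}}{4d}}}{\kappa_{\max} - 1}.$$ Then for every $\boldsymbol{\gamma} = (\gamma_1,\ldots,\gamma_d)$ with all $\gamma_i > 0$, the $\ell_2$ condition number satisfies $\kappa\!\left(\tilde{\mathsf{K}}_\nabla(\boldsymbol{\gamma}) + \eta_{\tilde{\mathsf{K}}_\nabla}(n_x,d)\, \mathsf{I}\right) \le \kappa_{\max}$.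
   Context: Write $\tilde{x}_{ij} = \gamma_j x_{ij}$, where $x_{ij}$ is the $(i,j)$ entry of $\mathsf{X}$, and $\tilde{\mathbf{x}}_{i:} = (\tilde{x}_{i1},\ldots,\tilde{x}_{id})$. Define $n_x\times n_x$ matrices $\mathsf{K}_{ab} = \exp\!\left(-\tfrac12 \|\tilde{\mathbf{x}}_{a:} - \tilde{\mathbf{x}}_{b:}\|_2^2\right)$ and $(\tilde{\mathsf{R}}_j)_{ab} = \tilde{x}_{aj} - \tilde{x}_{bj}$. $\tilde{\mathsf{K}}_\nabla(\boldsymbol{\gamma})$ is the symmetric $n_x(d+1)\times n_x(d+1)$ block matrix with blocks indexed by $0,\ldots,d$: block $(0,0)$ is $\mathsf{K}$; block $(0,j)$ has entries $(\tilde{\mathsf{R}}_j)_{ab}\mathsf{K}_{ab}$; block $(i,0)$ has entries $-(\tilde{\mathsf{R}}_i)_{ab}\mathsf{K}_{ab}$; block $(i,j)$, $i,j\ge1$, has entries $(\delta_{ij} - (\tilde{\mathsf{R}}_i)_{ab}(\tilde{\mathsf{R}}_j)_{ab})\mathsf{K}_{ab}$. Equivalently $\tilde{\mathsf{K}}_\nabla = \mathsf{P}^{-1}\mathsf{K}_\nabla\mathsf{P}^{-1}$, where $\mathsf{K}_\nabla$ is the (positive semidefinite) gradient-enhanced kernel matrix of the Gaussian kernel $k(\mathbf{x},\mathbf{y}) = e^{-\frac12\sum_i \gamma_i^2(x_i-y_i)^2}$ at the rows of $\mathsf{X}$ (the covariance matrix of the function values and partial derivatives at these points) and $\mathsf{P}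 = \mathrm{diag}(\mathbf{1}_{n_x}, \gamma_1\mathbf{1}_{n_x},\ldots,\gamma_d\mathbf{1}_{n_x})$. $\mathsf{I}$ is the identity matrix and $\kappa(\cdot)$ the $\ell_2$ condition number. *)

theory Defs
  imports "HOL-Analysis.Analysis"
begin

text \<open>Points: rows of X indexed by the finite type 'n (n_x = CARD('n));
  coordinates indexed by the finite type 'd (d = CARD('d)).
  Block index 0 is represented by None, block j (1..d) by Some j.\<close>

definition scaled_pt :: "real^'d \<Rightarrow> real^'d^'n \<Rightarrow> 'n \<Rightarrow> 'd \<Rightarrow> real" where
  "scaled_pt \<gamma> X a j = \<gamma>$j * X$a$j"

definition gaussK :: "real^'d \<Rightarrow> real^'d^'n \<Rightarrow> 'n \<Rightarrow> 'n \<Rightarrow> real" where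
  "gaussK \<gamma> X a b = exp (-(1/2) * (\<Sum>j\<in>UNIV. (scaled_pt \<gamma> X a j - scaled_pt \<gamma> X b j)^2))"

definition Rdiff :: "real^'d \<Rightarrow> real^'d^'n \<Rightarrow> 'd \<Rightarrow> 'n \<Rightarrow> 'n \<Rightarrow> real" where
  "Rdiff \<gamma> X j a b = scaled_pt \<gamma> X a j - scaled_pt \<gamma> X b j"

definition modGradK :: "real^'d \<Rightarrow> real^'d^'n \<Rightarrow> real^('n \<times> 'd option)^('n \<times> 'd option)" where
  "modGradK \<gamma> X = (\<chi> p q. (case (p, q) of
      ((a, None), (b, None)) \<Rightarrow> gaussK \<gamma> X a b
    | ((a, None), (b, Some j)) \<Rightarrow> Rdiff \<gamma> X j a b * gaussK \<gamma> X a b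
    | ((a, Some i), (b, None)) \<Rightarrow> - Rdiff \<gamma> X i a b * gaussK \<gamma> X a b
    | ((a, Some i), (b, Some j)) \<Rightarrow>
         ((if i = j then 1 else 0) - Rdiff \<gamma> X i a b * Rdiff \<gamma> X j a b) * gaussK \<gamma> X a b))"

definition cond2 :: "real^'m^'m \<Rightarrow> ereal" where
  "cond2 A = (if invertible A
     then ereal (onorm (\<lambda>x. A *v x) * onorm (\<lambda>x. matrix_inv A *v x))
     else \<infinity>)"

definition etaK :: "real \<Rightarrow> nat \<Rightarrow> nat \<Rightarrow> real" where
  "etaK \<kappa>max nx d =
     (1 + (real nx - 1) * ((1 + sqrt (1 + 4 * real d)) / 2)
        * exp (- (1 + 2 * real d - sqrt (1 + 4 * real d)) / (4 * real d)))
     / (\<kappa>max - 1)"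

end

theory Submission
  imports Defs "HOL-Analysis.Analysis"
begin


lemma ser_exp: "(\<lambda>n. u^n / fact n) sums exp (u::real)"
  using exp_converges[of u] by (simp add: divide_inverse mult.commute)

lemma fsuc: "real (Suc n) * x / fact (Suc n) = x / (fact n :: real)"
proof -
  have "fact (Suc n) = real (Suc n) * (fact n :: real)" by (rule fact_Suc)
  then show ?thesis by (metis mult_divide_mult_cancel_left_if of_nat_eq_0_iff nat.distinct(1))
qed

lemma ser_n: "(\<lambda>n. real n * u^n / fact n) sums (u * exp (u::real))"
proof -
  have "(\<lambda>n. real (Suc n) * u^(Suc n) / fact (Suc n)) = (\<lambda>n. u * (u^n / fact n))"
  proof
    fix n show "real (Suc n) * u^(Suc n) / fact (Suc n) = u * (u^n / fact n)"
      using fsuc[of n "u^Suc n"] by simp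
  qed
  moreover have "(\<lambda>n. u * (u^n / fact n)) sums (u * exp u)"
    by (rule sums_mult[OF ser_exp])
  ultimately have "(\<lambda>n. real (Suc n) * u^(Suc n) / fact (Suc n)) sums (u * exp u + 0)" by simp
  then show ?thesis by (subst (asm) sums_Suc_iff[where f="\<lambda>n. real n * u^n / fact n"]) simp
qed

lemma ser_n1: "(\<lambda>n. real n * a^(n-1) * b^n / fact n) sums (b * exp ((a::real)*b))"
proof -
  have "(\<lambda>n. real (Suc n) * a^(Suc n - 1) * b^(Suc n) / fact (Suc n)) = (\<lambda>n. b * ((a*b)^n / fact n))"
  proof
    fix n show "real (Suc n) * a^(Suc n - 1) * b^(Suc n) / fact (Suc n) = b * ((a*b)^n / fact n)"
      using fsuc[of n "a^n * b^Suc n"] by (simp add: mult.assoc power_mult_distrib mult.left_commute)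
  qed
  moreover have "(\<lambda>n. b * ((a*b)^n / fact n)) sums (b * exp (a*b))"
    by (rule sums_mult[OF ser_exp])
  ultimately have "(\<lambda>n. real (Suc n) * a^(Suc n - 1) * b^(Suc n) / fact (Suc n)) sums (b * exp (a*b) + 0)" by simp
  then show ?thesis by (subst (asm) sums_Suc_iff[where f="\<lambda>n. real n * a^(n-1) * b^n / fact n"]) simp
qed

lemma ser_nn: "(\<lambda>n. real n * real n * u^(n-1) / fact n) sums ((1 + u) * exp (u::real))"
proof -
  have "(\<lambda>n. real (Suc n) * real (Suc n) * u^(Suc n - 1) / fact (Suc n)) = (\<lambda>n. real n * u^n / fact n + u^n / fact n)"
  proof
    fix n show "real (Suc n) * real (Suc n) * u^(Suc n - 1) / fact (Suc n) = real n * u^n / fact n + u^n / fact n"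
      using fsuc[of n "real (Suc n) * u^n"] by (simp add: mult.assoc add_divide_distrib algebra_simps)
  qed
  moreover have "(\<lambda>n. real n * u^n / fact n + u^n / fact n) sums (u * exp u + exp u)"
    by (rule sums_add[OF ser_n ser_exp])
  ultimately have "(\<lambda>n. real (Suc n) * real (Suc n) * u^(Suc n - 1) / fact (Suc n)) sums ((1+u) * exp u + 0)"
    by (simp add: algebra_simps)
  then show ?thesis by (subst (asm) sums_Suc_iff[where f="\<lambda>n. real n * real n * u^(n-1) / fact n"]) simp
qed



definition feat :: "nat \<Rightarrow> real \<Rightarrow> bool \<Rightarrow> real" where
  "feat n s \<alpha> = exp (-(s^2)/2) * (if \<alpha> then real n * s^(n-1) - s^(n+1) else s^n)"

definition kern1 :: "real \<Rightarrow> real \<Rightarrow> bool \<Rightarrow> bool \<Rightarrow> real" where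
  "kern1 s t \<alpha> \<beta> = exp (-((s-t)^2)/2) *
     (if \<alpha> then (if \<beta> then 1 - (s-t)^2 else -(s-t)) else (if \<beta> then s-t else 1))"

lemma algTT: "(es*(N*x1 - s*x)) * (et*(N*y1 - t*y)) / F = (es*et) * (N*N*(x1*y1)/F - t*(N*x1*y/F) - s*(N*y1*x/F) + (s*t)*(x*y/F))" for es et N x1 x y1 y s t F :: real
  by (simp add: divide_inverse algebra_simps)
lemma algTF: "(es*(N*x1 - s*x)) * (et*y) / F = (es*et) * (N*x1*y/F - s*(x*y/F))" for es et N x1 x y s t F :: real
  by (simp add: divide_inverse algebra_simps)
lemma algFT: "(es*x) * (et*(N*y1 - t*y)) / F = (es*et) * (N*y1*x/F - t*(x*y/F))" for es et N x y1 y s t F :: real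
  by (simp add: divide_inverse algebra_simps)
lemma algFF: "(es*x) * (et*y) / F = (es*et) * (x*y/F)" for es et x y F :: real
  by (simp add: divide_inverse algebra_simps)

lemma kern1_series: "(\<lambda>n. feat n s \<alpha> * feat n t \<beta> / fact n) sums kern1 s t \<alpha> \<beta>"
proof -
  define E where "E = exp (-(s^2)/2) * exp (-(t^2)/2)"
  have EE: "E * exp (s*t) = exp (-((s-t)^2)/2)"
    unfolding E_def by (simp add: exp_add[symmetric] power2_eq_square algebra_simps)
  have P1: "\<And>n. s^(n+1) = s * s^n" "\<And>n. t^(n+1) = t * t^n" by simp_all
  have ss: "(\<lambda>n. (s*t)^n / fact n) = (\<lambda>n. s^n*t^n / fact n)"
      "(\<lambda>n. real n * real n * (s*t)^(n-1) / fact n) = (\<lambda>n. real n * real n * (s^(n-1)*t^(n-1)) / fact n)"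
    by (simp_all add: power_mult_distrib)
  have S0: "(\<lambda>n. s^n*t^n / fact n) sums exp (s*t)" using ser_exp[of "s*t"] ss(1) by simp
  have S2: "(\<lambda>n. real n * real n * (s^(n-1)*t^(n-1)) / fact n) sums ((1+s*t) * exp (s*t))"
    using ser_nn[of "s*t"] ss(2) by simp
  show ?thesis
  proof (cases \<alpha>; cases \<beta>)
    assume a: \<alpha> and b: \<beta>
    have "(\<lambda>n. feat n s \<alpha> * feat n t \<beta> / fact n) = (\<lambda>n. E * (real n * real n * (s^(n-1)*t^(n-1)) / fact n
        - t * (real n * s^(n-1) * t^n / fact n) - s * (real n * t^(n-1) * s^n / fact n) + (s*t) * (s^n*t^n / fact n)))"
      unfolding feat_def E_def P1 using a b by (simp only: if_True algTT)
    moreover have "(\<lambda>n. E * (real n * real n * (s^(n-1)*t^(n-1)) / fact n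
        - t * (real n * s^(n-1) * t^n / fact n) - s * (real n * t^(n-1) * s^n / fact n) + (s*t) * (s^n*t^n / fact n)))
        sums (E * ((1 + s*t) * exp (s*t) - t * (t * exp (s*t)) - s * (s * exp (t * s)) + (s*t) * exp (s*t)))"
      by (intro sums_mult sums_add sums_diff S0 S2 ser_n1)
    moreover have "E * ((1 + s*t) * exp (s*t) - t * (t * exp (s*t)) - s * (s * exp (t * s)) + (s*t) * exp (s*t))
       = kern1 s t \<alpha> \<beta>"
    proof -
      have "E * ((1 + s*t) * exp (s*t) - t * (t * exp (s*t)) - s * (s * exp (t * s)) + (s*t) * exp (s*t))
         = (E * exp (s*t)) * (1 - (s-t)^2)" by (simp add: mult.commute[of t s] power2_eq_square algebra_simps)
      then show ?thesis unfolding kern1_def EE using a b by simp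
    qed
    ultimately show ?thesis by simp
  next
    assume a: \<alpha> and b: "\<not>\<beta>"
    have "(\<lambda>n. feat n s \<alpha> * feat n t \<beta> / fact n) = (\<lambda>n. E * (real n * s^(n-1) * t^n / fact n - s * (s^n*t^n / fact n)))"
      unfolding feat_def E_def P1 using a b by (simp only: if_True if_False algTF)
    moreover have "(\<lambda>n. E * (real n * s^(n-1) * t^n / fact n - s * (s^n*t^n / fact n))) sums (E * (t * exp (s*t) - s * exp (s*t)))"
      by (intro sums_mult sums_add sums_diff S0 ser_n1)
    moreover have "E * (t * exp (s*t) - s * exp (s*t)) = kern1 s t \<alpha> \<beta>"
    proof -
      have "E * (t * exp (s*t) - s * exp (s*t)) = (E * exp (s*t)) * (-(s-t))" by (simp add: algebra_simps)
      then show ?thesis unfolding kern1_def EE using a b by simp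
    qed
    ultimately show ?thesis by simp
  next
    assume a: "\<not>\<alpha>" and b: "\<beta>"
    have "(\<lambda>n. feat n s \<alpha> * feat n t \<beta> / fact n) = (\<lambda>n. E * (real n * t^(n-1) * s^n / fact n - t * (s^n*t^n / fact n)))"
      unfolding feat_def E_def P1 using a b by (simp only: if_True if_False algFT)
    moreover have "(\<lambda>n. E * (real n * t^(n-1) * s^n / fact n - t * (s^n*t^n / fact n))) sums (E * (s * exp (t * s) - t * exp (s*t)))"
      by (intro sums_mult sums_add sums_diff S0 ser_n1)
    moreover have "E * (s * exp (t * s) - t * exp (s*t)) = kern1 s t \<alpha> \<beta>"
    proof -
      have "E * (s * exp (t * s) - t * exp (s*t)) = (E * exp (s*t)) * (s-t)" by (simp add: mult.commute[of t s] algebra_simps)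
      then show ?thesis unfolding kern1_def EE using a b by simp
    qed
    ultimately show ?thesis by simp
  next
    assume a: "\<not>\<alpha>" and b: "\<not>\<beta>"
    have "(\<lambda>n. feat n s \<alpha> * feat n t \<beta> / fact n) = (\<lambda>n. E * (s^n*t^n / fact n))"
      unfolding feat_def E_def using a b by (simp only: if_False algFF)
    moreover have "(\<lambda>n. E * (s^n*t^n / fact n)) sums (E * exp (s*t))"
      by (intro sums_mult S0)
    ultimately show ?thesis using EE a b by (simp add: kern1_def)
  qed
qed



lemma schur:
  fixes k :: "'m \<Rightarrow> 'p \<Rightarrow> 'p \<Rightarrow> real" and \<phi> :: "'m \<Rightarrow> nat \<Rightarrow> 'p \<Rightarrow> real"
  assumes "finite M" "finite P"
    and ser: "\<And>m p q. m \<in> M \<Longrightarrow> (\<lambda>n. \<phi> m n p * \<phi> m n q / fact n) sums k m p q"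
  shows "0 \<le> (\<Sum>p\<in>P. \<Sum>q\<in>P. c p * c q * (\<Prod>m\<in>M. k m p q))"
  using assms(1) ser
proof (induction M arbitrary: c rule: finite_induct)
  case empty
  have "(\<Sum>p\<in>P. \<Sum>q\<in>P. c p * c q * (\<Prod>m\<in>{}. k m p q)) = (\<Sum>p\<in>P. c p) * (\<Sum>q\<in>P. c q)"
    by (simp add: sum_product)
  also have "\<dots> \<ge> 0" by simp
  finally show ?case .
next
  case (insert m M)
  define R where "R p q = (\<Prod>m\<in>M. k m p q)" for p q
  have eq: "(\<Prod>m\<in>insert m M. k m p q) = k m p q * R p q" for p q
    using insert.hyps by (simp add: R_def)
  have S: "(\<lambda>n. \<Sum>p\<in>P. \<Sum>q\<in>P. c p * c q * (\<phi> m n p * \<phi> m n q / fact n * R p q))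
        sums (\<Sum>p\<in>P. \<Sum>q\<in>P. c p * c q * (k m p q * R p q))"
  proof -
    have t: "(\<lambda>n. c p * c q * (\<phi> m n p * \<phi> m n q / fact n * R p q)) sums (c p * c q * (k m p q * R p q))" for p q
      using sums_mult[OF sums_mult2[OF insert.prems[OF insertI1, of p q], of "R p q"], of "c p * c q"] .
    show ?thesis by (rule sums_sum, rule sums_sum, rule t)
  qed
  have N: "0 \<le> (\<Sum>p\<in>P. \<Sum>q\<in>P. c p * c q * (\<phi> m n p * \<phi> m n q / fact n * R p q))" for n
  proof -
    have "0 \<le> (\<Sum>p\<in>P. \<Sum>q\<in>P. (c p * \<phi> m n p) * (c q * \<phi> m n q) * R p q)"
      unfolding R_def by (rule insert.IH) (use insert.prems in simp)
    then have "0 \<le> (1 / fact n) * (\<Sum>p\<in>P. \<Sum>q\<in>P. (c p * \<phi> m n p) * (c q * \<phi> m n q) * R p q)"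
      by simp
    also have "\<dots> = (\<Sum>p\<in>P. \<Sum>q\<in>P. c p * c q * (\<phi> m n p * \<phi> m n q / fact n * R p q))"
      unfolding sum_distrib_left
      by (intro sum.cong refl) (simp add: divide_inverse mult_ac)
    finally show ?thesis .
  qed
  have "0 \<le> (\<Sum>p\<in>P. \<Sum>q\<in>P. c p * c q * (k m p q * R p q))"
    by (rule sums_le[OF _ sums_zero S]) (rule N)
  then show ?case by (simp add: eq)
qed

definition kf :: "real^'d \<Rightarrow> real^'d^'n \<Rightarrow> 'd \<Rightarrow> ('n \<times> 'd option) \<Rightarrow> ('n \<times> 'd option) \<Rightarrow> real" where
  "kf \<gamma> X m p q = kern1 (scaled_pt \<gamma> X (fst p) m) (scaled_pt \<gamma> X (fst q) m) (snd p = Some m) (snd q = Some m)"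

lemma mgNN: "modGradK \<gamma> X $ (a,None) $ (b,None) = gaussK \<gamma> X a b"
  unfolding modGradK_def by (simp only: vec_lambda_beta prod.case option.case)
lemma mgNS: "modGradK \<gamma> X $ (a,None) $ (b,Some j) = Rdiff \<gamma> X j a b * gaussK \<gamma> X a b"
  unfolding modGradK_def by (simp only: vec_lambda_beta prod.case option.case)
lemma mgSN: "modGradK \<gamma> X $ (a,Some i) $ (b,None) = - Rdiff \<gamma> X i a b * gaussK \<gamma> X a b"
  unfolding modGradK_def by (simp only: vec_lambda_beta prod.case option.case)
lemma mgSS: "modGradK \<gamma> X $ (a,Some i) $ (b,Some j) = ((if i = j then 1 else 0) - Rdiff \<gamma> X i a b * Rdiff \<gamma> X j a b) * gaussK \<gamma> X a b"
  unfolding modGradK_def by (simp only: vec_lambda_beta prod.case option.case)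

lemma gauss_prod:
  fixes X :: "real^'d^'n" and \<gamma> :: "real^'d"
  shows "(\<Prod>m\<in>UNIV. exp (-((Rdiff \<gamma> X m a b)^2)/2)) = gaussK \<gamma> X a b"
proof -
  have "(\<Prod>m\<in>UNIV. exp (-((Rdiff \<gamma> X m a b)^2)/2)) = exp (\<Sum>m\<in>UNIV. -((Rdiff \<gamma> X m a b)^2)/2)"
    by (simp add: exp_sum)
  also have "(\<Sum>m\<in>UNIV. -((Rdiff \<gamma> X m a b)^2)/2) = -(1/2) * (\<Sum>j\<in>UNIV. (scaled_pt \<gamma> X a j - scaled_pt \<gamma> X b j)^2)"
    unfolding Rdiff_def by (simp add: sum_distrib_left sum_divide_distrib sum_negf)
  finally show ?thesis unfolding gaussK_def .
qed

lemma modGradK_prod0: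
  fixes X :: "real^'d^'n" and \<gamma> :: "real^'d"
  shows "modGradK \<gamma> X $ (a,i) $ (b,j) = (\<Prod>m\<in>UNIV. kf \<gamma> X m (a,i) (b,j))"
proof -
  define R where "R m = Rdiff \<gamma> X m a b" for m
  define f where "f m = (if i = Some m then (if j = Some m then 1 - (R m)^2 else -(R m)) else (if j = Some m then R m else 1))" for m
  have "(\<Prod>m\<in>UNIV. kf \<gamma> X m (a,i) (b,j)) = (\<Prod>m\<in>UNIV. exp (-((R m)^2)/2) * f m)"
    unfolding kf_def kern1_def R_def f_def Rdiff_def fst_conv snd_conv ..
  also have "\<dots> = (\<Prod>m\<in>UNIV. exp (-((R m)^2)/2)) * (\<Prod>m\<in>UNIV. f m)"
    by (rule prod.distrib)
  also have "(\<Prod>m\<in>UNIV. exp (-((R m)^2)/2)) = gaussK \<gamma> X a b"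
    unfolding R_def by (rule gauss_prod)
  finally have main: "(\<Prod>m\<in>UNIV. kf \<gamma> X m (a,i) (b,j)) = gaussK \<gamma> X a b * (\<Prod>m\<in>UNIV. f m)" .
  show ?thesis
  proof (cases i)
    case iN: None
    show ?thesis
    proof (cases j)
      case jN: None
      have "f = (\<lambda>m. 1)" by (rule ext) (simp add: f_def iN jN)
      then have "prod f UNIV = 1" by simp
      moreover have "modGradK \<gamma> X $ (a,i) $ (b,j) = gaussK \<gamma> X a b" unfolding iN jN by (rule mgNN)
      ultimately show ?thesis using main by simp
    next
      case jS: (Some j0)
      have "f = (\<lambda>m. if m = j0 then R m else 1)" by (rule ext) (auto simp add: f_def iN jS)
      then have "prod f UNIV = R j0" by simp
      moreover have "modGradK \<gamma> X $ (a,i) $ (b,j) = R j0 * gaussK \<gamma> X a b" unfolding iN jS R_def by (rule mgNS)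
      ultimately show ?thesis using main by simp
    qed
  next
    case iS: (Some i0)
    show ?thesis
    proof (cases j)
      case jN: None
      have "f = (\<lambda>m. if m = i0 then - R m else 1)" by (rule ext) (auto simp add: f_def iS jN)
      then have "prod f UNIV = - R i0" by simp
      moreover have "modGradK \<gamma> X $ (a,i) $ (b,j) = - R i0 * gaussK \<gamma> X a b" unfolding iS jN R_def by (rule mgSN)
      ultimately show ?thesis using main by simp
    next
      case jS: (Some j0)
      show ?thesis
      proof (cases "i0 = j0")
        case True
        have "f = (\<lambda>m. if m = i0 then 1 - (R m)^2 else 1)" by (rule ext) (auto simp add: f_def iS jS True)
        then have "prod f UNIV = 1 - (R i0)^2" by simp
        moreover have "modGradK \<gamma> X $ (a,i) $ (b,j) = (1 - (R i0)^2) * gaussK \<gamma> X a b"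
          unfolding iS jS R_def mgSS using True by (simp add: power2_eq_square)
        ultimately show ?thesis using main by simp
      next
        case False
        have "f = (\<lambda>m. (if m = i0 then -(R m) else 1) * (if m = j0 then R m else 1))"
          by (rule ext) (use False in \<open>auto simp: f_def iS jS\<close>)
        then have "prod f UNIV = - R i0 * R j0"
          by (simp add: prod.distrib)
        moreover have "modGradK \<gamma> X $ (a,i) $ (b,j) = (- R i0 * R j0) * gaussK \<gamma> X a b"
          unfolding iS jS R_def mgSS using False by simp
        ultimately show ?thesis using main by simp
      qed
    qed
  qed
qed

lemma modGradK_prod:
  fixes X :: "real^'d^'n" and \<gamma> :: "real^'d"
  shows "modGradK \<gamma> X $ p $ q = (\<Prod>m\<in>UNIV. kf \<gamma> X m p q)"
proof -
  obtain a i b j where "p = (a,i)" "q = (b,j)" by (cases p, cases q) auto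
  then show ?thesis using modGradK_prod0 by simp
qed

lemma modGradK_psd:
  fixes X :: "real^'d^'n" and \<gamma> :: "real^'d"
  shows "0 \<le> (\<Sum>p\<in>UNIV. \<Sum>q\<in>UNIV. c p * c q * modGradK \<gamma> X $ p $ q)"
proof -
  have "0 \<le> (\<Sum>p\<in>UNIV. \<Sum>q\<in>UNIV. c p * c q * (\<Prod>m\<in>UNIV. kf \<gamma> X m p q))"
    by (rule schur[where \<phi> = "\<lambda>m n p. feat n (scaled_pt \<gamma> X (fst p) m) (snd p = Some m)"])
       (auto simp: kf_def kern1_series)
  then show ?thesis by (simp add: modGradK_prod)
qed



lemma scaleR_mat1_mult: "((c::real) *\<^sub>R mat 1) *v (x::real^'p) = c *\<^sub>R x"
proof -
  have "((c::real) *\<^sub>R mat 1) *v (x::real^'p) = c *\<^sub>R (mat 1 *v x)"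
    by (simp add: vec_eq_iff matrix_vector_mult_def sum_distrib_left mult.assoc)
  then show ?thesis by simp
qed

lemma inner_mat: "(x::real^'p) \<bullet> (A *v y) = (\<Sum>p\<in>UNIV. \<Sum>q\<in>UNIV. x$p * y$q * A$p$q)"
  by (simp add: inner_vec_def matrix_vector_mult_def sum_distrib_left mult_ac)

lemma inner_mat_sym:
  fixes A :: "real^'p^'p"
  assumes sym: "\<And>p q. A$p$q = A$q$p"
  shows "x \<bullet> (A *v y) = y \<bullet> (A *v x)"
  unfolding inner_mat
  by (subst sum.swap) (simp add: sym mult_ac)

lemma upper_norm:
  fixes A :: "real^'p^'p"
  assumes sym: "\<And>p q. A$p$q = A$q$p"
    and psd: "\<And>x. 0 \<le> x \<bullet> (A *v x)"
    and ub: "\<And>x. x \<bullet> (A *v x) \<le> M * (x \<bullet> x)"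
    and M: "M > 0"
  shows "norm (A *v x) \<le> M * norm x"
proof -
  define y where "y = A *v x"
  have xy: "x \<bullet> (A *v y) = y \<bullet> y" using inner_mat_sym[OF sym, of x y] y_def by simp
  have yx: "y \<bullet> (A *v x) = y \<bullet> y" using y_def by simp
  have "0 \<le> (M *\<^sub>R x - y) \<bullet> (A *v (M *\<^sub>R x - y))" by (rule psd)
  also have "\<dots> = M*M * (x \<bullet> (A *v x)) - M * (x \<bullet> (A *v y)) - M * (y \<bullet> (A *v x)) + y \<bullet> (A *v y)"
    unfolding matrix_vector_mult_diff_distrib matrix_vector_mult_scaleR inner_diff_left inner_diff_right
      inner_scaleR_left inner_scaleR_right by argo
  also have "\<dots> = M*M * (x \<bullet> (A *v x)) - 2 * M * (y \<bullet> y) + y \<bullet> (A *v y)"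
    using xy yx by simp
  finally have 1: "0 \<le> M*M * (x \<bullet> (A *v x)) - 2 * M * (y \<bullet> y) + y \<bullet> (A *v y)" .
  have 2: "M*M * (x \<bullet> (A *v x)) \<le> M*M * (M * (x \<bullet> x))"
    using ub[of x] M by (intro mult_left_mono) auto
  have 3: "y \<bullet> (A *v y) \<le> M * (y \<bullet> y)" by (rule ub)
  from 1 2 3 have "M * (y \<bullet> y) \<le> M * (M * M * (x \<bullet> x))" by (simp only: mult.assoc)
  then have "y \<bullet> y \<le> (M * M) * (x \<bullet> x)" using M by (simp only: mult_le_cancel_left_pos)
  moreover have "y \<bullet> y = (norm y)^2" by (rule power2_norm_eq_inner[symmetric])
  moreover have "(M * norm x)^2 = M * M * (x \<bullet> x)"
  proof -
    have "(M * norm x)^2 = M^2 * (norm x)^2" by (rule power_mult_distrib)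
    also have "\<dots> = M * M * (x \<bullet> x)" by (simp only: power2_norm_eq_inner power2_eq_square[of M])
    finally show ?thesis .
  qed
  ultimately have "(norm y)^2 \<le> (M * norm x)^2" by linarith
  moreover have nn: "0 \<le> M * norm x" using M by simp
  ultimately have "norm y \<le> M * norm x" by (rule power2_le_imp_le)
  then show ?thesis using y_def by simp
qed

lemma lower_norm:
  fixes A :: "real^'p^'p"
  assumes lb: "\<And>x. e * (x \<bullet> x) \<le> x \<bullet> (A *v x)"
  shows "e * norm x \<le> norm (A *v x)"
proof (cases "x = 0")
  case True then show ?thesis by simp
next
  case False
  have "e * (norm x * norm x) \<le> norm x * norm (A *v x)"
    using lb[of x] norm_cauchy_schwarz[of x "A *v x"]
    by (simp add: power2_norm_eq_inner[symmetric] power2_eq_square)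
  then have "norm x * (e * norm x) \<le> norm x * norm (A *v x)" by (simp only: mult.commute mult.left_commute)
  then show ?thesis using False by (simp add: mult_le_cancel_left_pos)
qed

lemma cond_bound:
  fixes A :: "real^'p^'p"
  assumes sym: "\<And>p q. A$p$q = A$q$p"
    and lb: "\<And>x. e * (x \<bullet> x) \<le> x \<bullet> (A *v x)"
    and ub: "\<And>x. x \<bullet> (A *v x) \<le> M * (x \<bullet> x)"
    and e: "e > 0"
  shows "cond2 A \<le> ereal (M / e)"
proof -
  have M: "M > 0"
  proof -
    define t where "t = (1::real^'p) \<bullet> 1"
    have "e * t \<le> M * t" using lb[of 1] ub[of 1] unfolding t_def by linarith
    moreover have "(1::real^'p) \<noteq> 0" by (simp add: vec_eq_iff)
    then have "t > 0" unfolding t_def by simp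
    ultimately have "e \<le> M" by simp
    then show ?thesis using e by simp
  qed
  have psd: "0 \<le> x \<bullet> (A *v x)" for x
  proof -
    have "0 \<le> e * (x \<bullet> x)" using e by simp
    then show ?thesis using lb[of x] by linarith
  qed
  have low: "e * norm x \<le> norm (A *v x)" for x by (rule lower_norm[OF lb])
  have inj: "inj ((*v) A)"
  proof -
    have "x = 0" if "A *v x = 0" for x
      using low[of x] that e by (simp add: mult_le_0_iff)
    then show ?thesis by (simp add: vec.inj_iff_eq_0)
  qed
  then have inv: "invertible A"
    by (simp only: invertible_left_inverse matrix_left_invertible_injective)
  have AB: "A ** matrix_inv A = mat 1"
    using inv unfolding invertible_def matrix_inv_def by (rule someI_ex[THEN conjunct1])
  have o1: "onorm (\<lambda>x. A *v x) \<le> M"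
    by (rule onorm_le) (rule upper_norm[OF sym psd ub M])
  have o2: "onorm (\<lambda>x. matrix_inv A *v x) \<le> 1 / e"
  proof (rule onorm_le)
    fix y :: "real^'p"
    have "e * norm (matrix_inv A *v y) \<le> norm (A *v (matrix_inv A *v y))" by (rule low)
    also have "A *v (matrix_inv A *v y) = y" by (simp add: matrix_vector_mul_assoc AB)
    finally show "norm (matrix_inv A *v y) \<le> 1 / e * norm y" using e by (simp add: field_simps)
  qed
  have p1: "0 \<le> onorm (\<lambda>x. A *v x)" by (rule onorm_pos_le) simp
  have p2: "0 \<le> onorm (\<lambda>x. matrix_inv A *v x)" by (rule onorm_pos_le) simp
  have "onorm (\<lambda>x. A *v x) * onorm (\<lambda>x. matrix_inv A *v x) \<le> M * (1 / e)"
    by (rule mult_mono[OF o1 o2]) (use M p2 in auto)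
  then show ?thesis using inv unfolding cond2_def by simp
qed



lemma block_ub:
  fixes K :: "real^('n::finite \<times> 'o::finite)^('n \<times> 'o)" and x :: "real^('n \<times> 'o)"
  assumes sym: "\<And>p q. K$p$q = K$q$p"
    and psd: "\<And>z. 0 \<le> z \<bullet> (K *v z)"
    and diag: "\<And>a i j. K$(a,i)$(a,j) = (if i = j then 1 else 0)"
  shows "x \<bullet> (K *v x) \<le> real CARD('n) * (x \<bullet> x)"
proof -
  define e where "e a = (\<chi> p. if fst p = a then x$p else 0)" for a
  have xs: "x = (\<Sum>a\<in>UNIV. e a)"
    by (simp add: vec_eq_iff e_def sum_component)
  have lin: "K *v (\<Sum>a\<in>UNIV. e a) = (\<Sum>a\<in>UNIV. K *v e a)"
    by (simp add: vec_eq_iff sum_component matrix_vector_mult_def sum_distrib_left) (intro allI sum.swap)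
  have dec: "x \<bullet> (K *v x) = (\<Sum>a\<in>UNIV. \<Sum>b\<in>UNIV. e a \<bullet> (K *v e b))"
  proof -
    have "x \<bullet> (K *v x) = (\<Sum>a\<in>UNIV. e a) \<bullet> (\<Sum>b\<in>UNIV. K *v e b)"
      using lin xs by simp
    also have "\<dots> = (\<Sum>a\<in>UNIV. \<Sum>b\<in>UNIV. e a \<bullet> (K *v e b))"
      by (simp add: inner_sum_left inner_sum_right) (rule sum.swap)
    finally show ?thesis .
  qed
  have self: "e a \<bullet> (K *v e a) = e a \<bullet> e a" for a
  proof -
    have "e a \<bullet> (K *v e a) = (\<Sum>p\<in>UNIV. \<Sum>q\<in>UNIV. e a $ p * e a $ q * K $ p $ q)"
      by (rule inner_mat)
    also have "\<dots> = (\<Sum>p\<in>UNIV. \<Sum>q\<in>UNIV. if q = p then e a $ p * e a $ p else 0)"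
    proof (intro sum.cong refl)
      fix p q :: "'n \<times> 'o"
      obtain a1 i where p: "p = (a1,i)" by (cases p)
      obtain b1 j where q: "q = (b1,j)" by (cases q)
      show "e a $ p * e a $ q * K $ p $ q = (if q = p then e a $ p * e a $ p else 0)"
        unfolding p q e_def by (auto simp: diag)
    qed
    also have "\<dots> = e a \<bullet> e a"
      by (simp add: inner_vec_def)
    finally show ?thesis .
  qed
  have cross: "e a \<bullet> (K *v e b) \<le> (e a \<bullet> e a + e b \<bullet> e b) / 2" for a b
  proof -
    have "0 \<le> (e a - e b) \<bullet> (K *v (e a - e b))" by (rule psd)
    also have "\<dots> = e a \<bullet> (K *v e a) - e a \<bullet> (K *v e b) - e b \<bullet> (K *v e a) + e b \<bullet> (K *v e b)"
      unfolding matrix_vector_mult_diff_distrib inner_diff_left inner_diff_right by argo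
    also have "e b \<bullet> (K *v e a) = e a \<bullet> (K *v e b)" by (rule inner_mat_sym[OF sym])
    finally show ?thesis unfolding self by argo
  qed
  have "x \<bullet> (K *v x) \<le> (\<Sum>a\<in>UNIV. \<Sum>b\<in>UNIV. (e a \<bullet> e a + e b \<bullet> e b) / 2)"
    unfolding dec by (intro sum_mono cross)
  also have "\<dots> = (\<Sum>a\<in>UNIV. \<Sum>b\<in>(UNIV::'n set). (e a \<bullet> e a) / 2) + (\<Sum>a\<in>(UNIV::'n set). \<Sum>b\<in>UNIV. (e b \<bullet> e b) / 2)"
    by (simp add: add_divide_distrib sum.distrib)
  also have "(\<Sum>a\<in>(UNIV::'n set). \<Sum>b\<in>UNIV. (e b \<bullet> e b) / 2) = (\<Sum>a\<in>UNIV. \<Sum>b\<in>(UNIV::'n set). (e a \<bullet> e a) / 2)"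
    by (rule sum.swap)
  also have "(\<Sum>a\<in>UNIV. \<Sum>b\<in>(UNIV::'n set). (e a \<bullet> e a) / 2) + (\<Sum>a\<in>UNIV. \<Sum>b\<in>(UNIV::'n set). (e a \<bullet> e a) / 2)
      = real CARD('n) * (\<Sum>a\<in>UNIV. e a \<bullet> e a)"
    by (simp add: sum_distrib_left)
  also have "(\<Sum>a\<in>UNIV. e a \<bullet> e a) = x \<bullet> x"
  proof -
    have "(\<Sum>a\<in>UNIV. e a \<bullet> e a) = (\<Sum>a\<in>UNIV. \<Sum>p\<in>UNIV. if fst p = a then x$p * x$p else 0)"
      by (intro sum.cong refl) (simp add: inner_vec_def e_def if_distrib cong: if_cong)
    also have "\<dots> = (\<Sum>p\<in>UNIV. \<Sum>a\<in>UNIV. if fst p = a then x$p * x$p else 0)"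
      by (rule sum.swap)
    also have "\<dots> = x \<bullet> x" by (simp add: inner_vec_def)
    finally show ?thesis .
  qed
  finally show ?thesis .
qed



lemma kern1_sym: "kern1 s t \<alpha> \<beta> = kern1 t s \<beta> \<alpha>"
proof -
  have "(s - t)^2 = (t - s)^2" by (simp add: power2_commute)
  then show ?thesis unfolding kern1_def by auto
qed

lemma modGradK_sym: "modGradK \<gamma> X $ p $ q = modGradK \<gamma> X $ q $ p"
  unfolding modGradK_prod kf_def by (subst kern1_sym) (rule refl)

lemma modGradK_diag: "modGradK \<gamma> X $ (a,i) $ (a,j) = (if i = j then 1 else 0)"
proof -
  have R0: "Rdiff \<gamma> X m a a = 0" for m by (simp add: Rdiff_def)
  have G1: "gaussK \<gamma> X a a = 1" by (simp add: gaussK_def)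
  show ?thesis
    by (cases i; cases j) (simp_all only: mgNN mgNS mgSN mgSS R0 G1 option.simps, simp_all)
qed

lemma modGradK_psd_vec: "0 \<le> z \<bullet> (modGradK \<gamma> X *v z)"
  unfolding inner_mat by (rule modGradK_psd)

lemma C_ge1:
  assumes "d \<ge> 1"
  shows "1 \<le> ((1 + sqrt (1 + 4 * real d)) / 2) * exp (- (1 + 2 * real d - sqrt (1 + 4 * real d)) / (4 * real d))"
proof -
  define D where "D = real d"
  define s where "s = sqrt (1 + 4 * D)"
  have D: "D \<ge> 1" using assms by (simp add: D_def)
  have s1: "s \<ge> 1" unfolding s_def using D by simp
  have ss: "s * s = 1 + 4 * D" unfolding s_def using D by simp
  define E where "E = - (1 + 2 * D - s) / (4 * D)"
  have eE: "1 + E \<le> exp E" by (rule exp_ge_add_one_self)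
  have oneE: "1 + E = (2 * D - 1 + s) / (4 * D)" unfolding E_def using D by (simp add: field_simps)
  have key: "(1 + s) * (2 * D - 1 + s) = 6 * D + 2 * D * s"
    using ss by (simp add: algebra_simps)
  have "8 * D \<le> 6 * D + 2 * D * s" using s1 D by (simp add: mult_left_mono)
  then have "1 \<le> (1 + s) * (2 * D - 1 + s) / (8 * D)" using key D by simp
  also have "(1 + s) * (2 * D - 1 + s) / (8 * D) = ((1 + s) / 2) * (1 + E)"
    unfolding oneE using D by (simp add: field_simps)
  also have "\<dots> \<le> ((1 + s) / 2) * exp E"
    using eE s1 by (intro mult_left_mono) auto
  finally show ?thesis unfolding E_def s_def D_def .
qed

theorem mainTheorem3:
  fixes X :: "real^'d^'n" and \<gamma> :: "real^'d" and \<kappa>max :: real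
  assumes "\<kappa>max > 1"
    and "\<forall>i. \<gamma>$i > 0"
  shows "cond2 (modGradK \<gamma> X + etaK \<kappa>max CARD('n) CARD('d) *\<^sub>R mat 1) \<le> ereal \<kappa>max"
proof -
  define K where "K = modGradK \<gamma> X"
  define \<eta> where "\<eta> = etaK \<kappa>max CARD('n) CARD('d)"
  define C where "C = ((1 + sqrt (1 + 4 * real CARD('d))) / 2) * exp (- (1 + 2 * real CARD('d) - sqrt (1 + 4 * real CARD('d))) / (4 * real CARD('d)))"
  define n where "n = real CARD('n)"
  have C1: "1 \<le> C" unfolding C_def by (rule C_ge1) (simp add: Suc_le_eq)
  have n1: "1 \<le> n" unfolding n_def by (simp add: Suc_le_eq)
  have Nn: "n \<le> 1 + (n - 1) * C"
  proof -
    have "(n - 1) * 1 \<le> (n - 1) * C" using C1 n1 by (intro mult_left_mono) auto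
    then show ?thesis by simp
  qed
  have eta: "\<eta> = (1 + (n - 1) * C) / (\<kappa>max - 1)"
    unfolding \<eta>_def etaK_def C_def n_def by (simp add: mult.assoc)
  have k1: "\<kappa>max - 1 > 0" using assms(1) by simp
  have epos: "\<eta> > 0" unfolding eta using Nn n1 k1 by simp
  define A where "A = K + \<eta> *\<^sub>R mat 1"
  have Asym: "A$p$q = A$q$p" for p q
    unfolding A_def K_def by (simp add: modGradK_sym[of \<gamma> X p q] mat_def eq_commute)
  have Aq: "x \<bullet> (A *v x) = x \<bullet> (K *v x) + \<eta> * (x \<bullet> x)" for x
    unfolding A_def by (simp add: matrix_vector_mult_add_rdistrib scaleR_mat1_mult inner_add_right)
  have lb: "\<eta> * (x \<bullet> x) \<le> x \<bullet> (A *v x)" for x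
    using modGradK_psd_vec[of x \<gamma> X] unfolding Aq K_def by simp
  have ub: "x \<bullet> (A *v x) \<le> (n + \<eta>) * (x \<bullet> x)" for x
  proof -
    have "x \<bullet> (K *v x) \<le> n * (x \<bullet> x)"
      unfolding K_def n_def
      by (rule block_ub) (simp_all add: modGradK_sym modGradK_psd_vec modGradK_diag)
    then show ?thesis unfolding Aq by (simp add: distrib_right)
  qed
  have "cond2 A \<le> ereal ((n + \<eta>) / \<eta>)"
    by (rule cond_bound[OF Asym lb ub epos])
  also have "(n + \<eta>) / \<eta> \<le> \<kappa>max"
  proof -
    have "(\<kappa>max - 1) * \<eta> = 1 + (n - 1) * C" unfolding eta using k1 by simp
    then have "n \<le> (\<kappa>max - 1) * \<eta>" using Nn by simp
    then have "n + \<eta> \<le> \<kappa>max * \<eta>" by (simp add: algebra_simps)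
    then show ?thesis using epos by (simp add: divide_le_eq)
  qed
  then have "ereal ((n + \<eta>) / \<eta>) \<le> ereal \<kappa>max" by simp
  finally show ?thesis unfolding A_def K_def \<eta>_def .
qed

end
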